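(* Let $T$ be a tree with $m$ edges, with the notation $T_A, T_B, t_1,\ldots,t_{a+b}, T(1),\ldots,T(a+b)$ fixed as in the context. Let $G$ be a bipartite graph on vertex classes $A$ and $B$. If $G$ admits a $T$-equitable edge-colouring, then $G$ has a $T^*$-decomposition.
   Context: All graphs are finite and loopless but may have multiple edges. Let $T$ be a tree with $m$ edges and let $T_A$, $T_B$ be the two vertex classes of a proper $2$-colouring of $T$, chosen so that $T_B$ contains a leaf of $T$. Denote the non-leaves of $T$ in $T_A$ by $t_1,\ldots,t_a$ and the non-leaves in $T_B$ by $t_{a+1},\ldots,t_{a+b}$. Colour the edges of $T$ with colours $1,\ldots,m$ so that distinct edges get distinct colours, and for $i\in\{1,\ldots,a+b\}$ let $T(i)$ be the set of colours of edges incident with $t_i$. For an edge-colouring of $G$ and a vertex $v$, $d_j(v)$ is the number of edges of colour $j$ at $v$. An edge-colouring of a bipartite graph $G$ with classes $A,B$ using colours $1,\ldots,m$ is $T$-equitable if (i) for every $v\in A$, $i\in\{1,\ldots,a\}$ and $j,k\in T(i)$ we have $d_j(v)=d_k(v)$, and (ii) for every $v\in B$, $i\in\{a+1,\ldots,a+b\}$ and $j,k\in T(i)$ we have $d_j(v)=d_k(v)$. A homomorphic copy of $T$ is a graph obtained from $T$ by identifying some vertices and keeping all edges; a $T^*$-decomposition of $G$ is a partition of $E(G)$ into subgraphs that are homomorphic copies of $T$. *)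

theory Defs
  imports Main
begin

definition simple_graph :: "'v set \<Rightarrow> 'v set set \<Rightarrow> bool" where
  "simple_graph V E \<longleftrightarrow> finite V \<and>
     (\<forall>e\<in>E. \<exists>u w. e = {u, w} \<and> u \<noteq> w \<and> u \<in> V \<and> w \<in> V)"

definition adj :: "'v set set \<Rightarrow> 'v \<Rightarrow> 'v \<Rightarrow> bool" where
  "adj E u w \<longleftrightarrow> {u, w} \<in> E"

definition graph_connected :: "'v set \<Rightarrow> 'v set set \<Rightarrow> bool" where
  "graph_connected V E \<longleftrightarrow> (\<forall>u\<in>V. \<forall>w\<in>V. (adj E)\<^sup>*\<^sup>* u w)"

definition graph_acyclic :: "'v set set \<Rightarrow> bool" where
  "graph_acyclic E \<longleftrightarrow> (\<forall>u w. {u, w} \<in> E \<longrightarrow> \<not> (adj (E - {{u, w}}))\<^sup>*\<^sup>* u w)"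

definition is_tree :: "'v set \<Rightarrow> 'v set set \<Rightarrow> bool" where
  "is_tree V E \<longleftrightarrow> simple_graph V E \<and> V \<noteq> {} \<and> graph_connected V E \<and> graph_acyclic E"

definition tdeg :: "'v set set \<Rightarrow> 'v \<Rightarrow> nat" where
  "tdeg E v = card {e\<in>E. v \<in> e}"

definition is_leaf :: "'v set set \<Rightarrow> 'v \<Rightarrow> bool" where
  "is_leaf E v \<longleftrightarrow> tdeg E v = 1"

definition proper_2col :: "'v set \<Rightarrow> 'v set set \<Rightarrow> 'v set \<Rightarrow> 'v set \<Rightarrow> bool" where
  "proper_2col V E TA TB \<longleftrightarrow> TA \<union> TB = V \<and> TA \<inter> TB = {} \<and>
     (\<forall>e\<in>E. \<exists>u w. e = {u, w} \<and> u \<in> TA \<and> w \<in> TB)"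

text \<open>Colours of the tree edges incident with a tree vertex t (the set T(i) for t = t_i).\<close>
definition tcols :: "'v set set \<Rightarrow> ('v set \<Rightarrow> nat) \<Rightarrow> 'v \<Rightarrow> nat set" where
  "tcols E c t = c ` {e\<in>E. t \<in> e}"

definition bip_multigraph :: "'a set \<Rightarrow> 'a set \<Rightarrow> 'e set \<Rightarrow> ('e \<Rightarrow> 'a) \<Rightarrow> ('e \<Rightarrow> 'a) \<Rightarrow> bool" where
  "bip_multigraph A B EG fA fB \<longleftrightarrow> finite A \<and> finite B \<and> finite EG \<and> A \<inter> B = {} \<and>
     (\<forall>e\<in>EG. fA e \<in> A \<and> fB e \<in> B)"

definition dcol :: "'e set \<Rightarrow> ('e \<Rightarrow> 'a) \<Rightarrow> ('e \<Rightarrow> 'a) \<Rightarrow> ('e \<Rightarrow> nat) \<Rightarrow> nat \<Rightarrow> 'a \<Rightarrow> nat" where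
  "dcol EG fA fB col j v = card {e\<in>EG. col e = j \<and> (fA e = v \<or> fB e = v)}"

definition T_equitable ::
  "'v set set \<Rightarrow> 'v set \<Rightarrow> 'v set \<Rightarrow> ('v set \<Rightarrow> nat) \<Rightarrow> nat \<Rightarrow>
   'a set \<Rightarrow> 'a set \<Rightarrow> 'e set \<Rightarrow> ('e \<Rightarrow> 'a) \<Rightarrow> ('e \<Rightarrow> 'a) \<Rightarrow> ('e \<Rightarrow> nat) \<Rightarrow> bool" where
  "T_equitable ET TA TB c m A B EG fA fB col \<longleftrightarrow>
     (\<forall>e\<in>EG. col e \<in> {1..m}) \<and>
     (\<forall>v\<in>A. \<forall>t\<in>TA. \<not> is_leaf ET t \<longrightarrow> (\<forall>j\<in>tcols ET c t. \<forall>k\<in>tcols ET c t.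
         dcol EG fA fB col j v = dcol EG fA fB col k v)) \<and>
     (\<forall>v\<in>B. \<forall>t\<in>TB. \<not> is_leaf ET t \<longrightarrow> (\<forall>j\<in>tcols ET c t. \<forall>k\<in>tcols ET c t.
         dcol EG fA fB col j v = dcol EG fA fB col k v))"

definition hom_copy ::
  "'v set \<Rightarrow> 'v set set \<Rightarrow> 'a set \<Rightarrow> 'a set \<Rightarrow> ('e \<Rightarrow> 'a) \<Rightarrow> ('e \<Rightarrow> 'a) \<Rightarrow> 'e set \<Rightarrow> bool" where
  "hom_copy VT ET A B fA fB F \<longleftrightarrow>
     (\<exists>phi psi. (\<forall>v\<in>VT. phi v \<in> A \<union> B) \<and> bij_betw psi ET F \<and>
        (\<forall>e\<in>ET. {fA (psi e), fB (psi e)} = phi ` e))"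

definition T_star_decomposition ::
  "'v set \<Rightarrow> 'v set set \<Rightarrow> 'a set \<Rightarrow> 'a set \<Rightarrow> 'e set \<Rightarrow> ('e \<Rightarrow> 'a) \<Rightarrow> ('e \<Rightarrow> 'a) \<Rightarrow> 'e set set \<Rightarrow> bool" where
  "T_star_decomposition VT ET A B EG fA fB P \<longleftrightarrow>
     \<Union>P = EG \<and> (\<forall>F1\<in>P. \<forall>F2\<in>P. F1 \<noteq> F2 \<longrightarrow> F1 \<inter> F2 = {}) \<and>
     (\<forall>F\<in>P. F \<subseteq> EG \<and> hom_copy VT ET A B fA fB F)"

end

theory Submission
  imports Defs
begin

lemma rtranclp_cross:
  assumes "r\<^sup>*\<^sup>* x y" "x \<in> X" "y \<notin> X"
  shows "\<exists>p q. p \<in> X \<and> q \<notin> X \<and> r p q"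
  using assms by (induction rule: rtranclp_induct) auto

lemma dcol_diff:
  assumes "finite E" "F \<subseteq> E"
  shows "dcol (E - F) fA fB col j v = dcol E fA fB col j v - card {g\<in>F. col g = j \<and> (fA g = v \<or> fB g = v)}"
proof -
  have "{g\<in>E-F. col g = j \<and> (fA g = v \<or> fB g = v)} = {g\<in>E. col g = j \<and> (fA g = v \<or> fB g = v)} - {g\<in>F. col g = j \<and> (fA g = v \<or> fB g = v)}"
    by blast
  moreover have "finite {g\<in>F. col g = j \<and> (fA g = v \<or> fB g = v)}"
    using finite_subset[OF assms(2) assms(1)] by simp
  moreover have "{g\<in>F. col g = j \<and> (fA g = v \<or> fB g = v)} \<subseteq> {g\<in>E. col g = j \<and> (fA g = v \<or> fB g = v)}"
    using assms by blast
  ultimately show ?thesis unfolding dcol_def by (simp add: card_Diff_subset)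
qed

locale L =
  fixes ET :: "'v set set" and TA TB :: "'v set" and c :: "'v set \<Rightarrow> nat" and m :: nat
    and A B :: "'a set" and EG :: "'e set" and fA fB :: "'e \<Rightarrow> 'a" and col :: "'e \<Rightarrow> nat"
  assumes finET: "finite ET"
    and neET: "ET \<noteq> {}"
    and edgesT: "\<forall>e\<in>ET. \<exists>u w. e = {u,w} \<and> u \<in> TA \<and> w \<in> TB"
    and disjT: "TA \<inter> TB = {}"
    and cinj: "inj_on c ET" and cim: "c ` ET = {1..m}"
    and finEG: "finite EG" and disjAB: "A \<inter> B = {}"
    and ends: "\<forall>g\<in>EG. fA g \<in> A \<and> fB g \<in> B"
    and colr: "\<forall>g\<in>EG. col g \<in> {1..m}"
    and conn: "\<forall>x\<in>\<Union>ET. \<forall>y\<in>\<Union>ET. (adj ET)\<^sup>*\<^sup>* x y"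
    and acyc: "graph_acyclic ET"
begin

definition eqt :: "'e set \<Rightarrow> bool" where
 "eqt E' \<longleftrightarrow> (\<forall>v\<in>A. \<forall>t\<in>TA. \<not> is_leaf ET t \<longrightarrow> (\<forall>j\<in>tcols ET c t. \<forall>k\<in>tcols ET c t.
         dcol E' fA fB col j v = dcol E' fA fB col k v)) \<and>
     (\<forall>v\<in>B. \<forall>t\<in>TB. \<not> is_leaf ET t \<longrightarrow> (\<forall>j\<in>tcols ET c t. \<forall>k\<in>tcols ET c t.
         dcol E' fA fB col j v = dcol E' fA fB col k v))"

definition inv :: "'e set \<Rightarrow> 'v set set \<Rightarrow> ('v \<Rightarrow> 'a) \<Rightarrow> ('v set \<Rightarrow> 'e) \<Rightarrow> bool" where
 "inv E' S phi psi \<longleftrightarrow> (\<forall>e\<in>S. psi e \<in> E' \<and> col (psi e) = c e \<and> {fA (psi e), fB (psi e)} = phi ` e) \<and>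
    (\<forall>t\<in>\<Union>S. (t \<in> TA \<longrightarrow> phi t \<in> A) \<and> (t \<in> TB \<longrightarrow> phi t \<in> B))"

definition conS :: "'v set set \<Rightarrow> bool" where
 "conS S \<longleftrightarrow> (\<forall>x\<in>\<Union>S. \<forall>y\<in>\<Union>S. (adj S)\<^sup>*\<^sup>* x y)"

lemma edge_ends:
  assumes "e \<in> ET"
  obtains u w where "e = {u,w}" "u \<in> TA" "w \<in> TB" "u \<noteq> w"
proof -
  obtain u w where uw: "e = {u,w}" "u \<in> TA" "w \<in> TB" using edgesT assms by blast
  have "u \<noteq> w" using uw(2,3) disjT by blast
  then show ?thesis using that uw by blast
qed

lemma UET: "\<Union>ET \<subseteq> TA \<union> TB"
proof
  fix x assume "x \<in> \<Union>ET"
  then obtain e where e: "e \<in> ET" "x \<in> e" by auto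
  obtain u w where "e = {u,w}" "u \<in> TA" "w \<in> TB" "u \<noteq> w" using edge_ends e(1) by metis
  then show "x \<in> TA \<union> TB" using e(2) by auto
qed

lemma orient_A:
  assumes inv: "inv E' S phi psi" and "E' \<subseteq> EG" "e \<in> S" "S \<subseteq> ET" "t \<in> e" "t \<in> TA"
  shows "fA (psi e) = phi t"
proof -
  obtain u w where e: "e = {u,w}" "u \<in> TA" "w \<in> TB" "u \<noteq> w" using edge_ends assms by blast
  have tu: "t = u" using e assms disjT by blast
  have pw: "phi w \<in> B" using inv e assms unfolding inv_def by blast
  have ge: "psi e \<in> EG" using inv assms unfolding inv_def by blast
  have eq: "{fA (psi e), fB (psi e)} = {phi u, phi w}" using inv e assms unfolding inv_def by auto
  have "fA (psi e) \<in> A" using ge ends by simp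
  then have "fA (psi e) \<noteq> phi w" using pw disjAB by (metis IntI empty_iff)
  then show ?thesis using eq tu by (auto simp: doubleton_eq_iff)
qed

lemma orient_B:
  assumes inv: "inv E' S phi psi" and "E' \<subseteq> EG" "e \<in> S" "S \<subseteq> ET" "t \<in> e" "t \<in> TB"
  shows "fB (psi e) = phi t"
proof -
  obtain u w where e: "e = {u,w}" "u \<in> TA" "w \<in> TB" "u \<noteq> w" using edge_ends assms by blast
  have tu: "t = w" using e assms disjT by blast
  have pw: "phi u \<in> A" using inv e assms unfolding inv_def by blast
  have ge: "psi e \<in> EG" using inv assms unfolding inv_def by blast
  have eq: "{fA (psi e), fB (psi e)} = {phi u, phi w}" using inv e assms unfolding inv_def by auto
  have "fB (psi e) \<in> B" using ge ends by simp
  then have "fB (psi e) \<noteq> phi u" using pw disjAB by (metis IntI empty_iff)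
  then show ?thesis using eq tu by (auto simp: doubleton_eq_iff)
qed

lemma ext_exists:
  assumes "S \<subseteq> ET" "S \<noteq> ET" "S \<noteq> {}" "conS S"
  shows "\<exists>e\<in>ET - S. \<exists>p q. e = {p,q} \<and> p \<in> \<Union>S \<and> q \<notin> \<Union>S"
proof -
  obtain e' where e': "e' \<in> ET" "e' \<notin> S" using assms by blast
  obtain u w where uw: "e' = {u,w}" "u \<in> TA" "w \<in> TB" "u \<noteq> w" using edge_ends e' by blast
  have "\<not> (u \<in> \<Union>S \<and> w \<in> \<Union>S)"
  proof
    assume "u \<in> \<Union>S \<and> w \<in> \<Union>S"
    then have "(adj S)\<^sup>*\<^sup>* u w" using assms(4) unfolding conS_def by blast
    moreover have "adj S \<le> adj (ET - {{u,w}})" using assms(1) e' uw unfolding adj_def by auto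
    ultimately have "(adj (ET - {{u,w}}))\<^sup>*\<^sup>* u w" using rtranclp_mono by blast
    then show False using acyc e' uw unfolding graph_acyclic_def by blast
  qed
  then obtain y where y: "y \<in> e'" "y \<notin> \<Union>S" using uw by blast
  obtain e1 where e1: "e1 \<in> S" using assms by blast
  then obtain x where x: "x \<in> e1" using edge_ends assms(1) by blast
  have "(adj ET)\<^sup>*\<^sup>* x y" using conn x e1 y e' assms(1) by blast
  then obtain p q where pq: "p \<in> \<Union>S" "q \<notin> \<Union>S" "adj ET p q"
    using rtranclp_cross[of "adj ET" x y "\<Union>S"] x e1 y by blast
  then have "{p,q} \<in> ET - S" unfolding adj_def by blast
  then show ?thesis using pq by blast
qed

lemma conS_ins:
  assumes "conS S" "p \<in> \<Union>S"
  shows "conS (insert {p,q} S)"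
proof -
  let ?S = "insert {p,q} S"
  have mono: "(adj S)\<^sup>*\<^sup>* \<le> (adj ?S)\<^sup>*\<^sup>*" by (rule rtranclp_mono) (auto simp: adj_def)
  have pq: "adj ?S p q" "adj ?S q p" by (auto simp: adj_def insert_commute)
  have h: "(adj ?S)\<^sup>*\<^sup>* x p \<and> (adj ?S)\<^sup>*\<^sup>* p x" if "x \<in> \<Union>?S" for x
  proof (cases "x \<in> \<Union>S")
    case True
    then show ?thesis using assms mono unfolding conS_def by blast
  next
    case False
    then have "x = p \<or> x = q" using that by auto
    then show ?thesis using pq by auto
  qed
  show ?thesis unfolding conS_def using h by (meson rtranclp_trans)
qed

lemma step:
  assumes inv: "inv E' S phi psi" and sub: "E' \<subseteq> EG" and eq: "eqt E'" and "S \<subseteq> ET"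
    and "e \<in> ET" "e \<notin> S" "e = {p,q}" "p \<in> \<Union>S" "q \<notin> \<Union>S"
  shows "\<exists>phi' psi'. inv E' (insert e S) phi' psi'"
proof -
  have finE': "finite E'" using sub finEG finite_subset by blast
  obtain e1 where e1: "e1 \<in> S" "p \<in> e1" using assms by blast
  have ne: "e1 \<noteq> e" using e1 assms by blast
  have "{e, e1} \<subseteq> {x\<in>ET. p \<in> x}" using assms e1 by auto
  then have "card {e, e1} \<le> tdeg ET p" unfolding tdeg_def using finET by (intro card_mono) auto
  then have nonleaf: "\<not> is_leaf ET p" using ne unfolding is_leaf_def by auto
  have ce: "c e \<in> tcols ET c p" "c e1 \<in> tcols ET c p" unfolding tcols_def using assms e1 by auto
  have pq: "p \<noteq> q" using assms by blast
  obtain u w where uw: "e = {u,w}" "u \<in> TA" "w \<in> TB" "u \<noteq> w" using edge_ends assms by blast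
  have "p \<in> TA \<union> TB" using UET assms by blast
  then show ?thesis
  proof
    assume pA: "p \<in> TA"
    have "p = u" "q = w" using pA uw assms disjT pq by (auto simp: doubleton_eq_iff)
    then have qB: "q \<in> TB" "q \<notin> TA" using uw disjT by auto
    have vA: "phi p \<in> A" using inv pA assms unfolding inv_def by blast
    have f1: "fA (psi e1) = phi p" using orient_A[OF inv sub e1(1) assms(4) e1(2) pA] .
    have "psi e1 \<in> {g\<in>E'. col g = c e1 \<and> (fA g = phi p \<or> fB g = phi p)}"
      using inv e1 f1 unfolding inv_def by auto
    then have "dcol E' fA fB col (c e1) (phi p) > 0" unfolding dcol_def using finE'
      by (simp add: card_gt_0_iff) blast
    moreover have "dcol E' fA fB col (c e) (phi p) = dcol E' fA fB col (c e1) (phi p)"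
      using eq vA pA nonleaf ce unfolding eqt_def by blast
    ultimately have "dcol E' fA fB col (c e) (phi p) > 0" by simp
    then have "{g\<in>E'. col g = c e \<and> (fA g = phi p \<or> fB g = phi p)} \<noteq> {}"
      unfolding dcol_def by (metis card.empty less_irrefl)
    then obtain g where g: "g \<in> E'" "col g = c e" "fA g = phi p \<or> fB g = phi p" by blast
    have gB: "fB g \<in> B" "fA g \<in> A" using g sub ends by auto
    then have gA: "fA g = phi p" using g(3) vA disjAB by (metis IntI empty_iff)
    let ?phi = "phi(q := fB g)" and ?psi = "psi(e := g)"
    have "inv E' (insert e S) ?phi ?psi"
      unfolding inv_def
    proof (rule conjI; intro ballI)
      fix e' assume "e' \<in> insert e S"
      then show "?psi e' \<in> E' \<and> col (?psi e') = c e' \<and> {fA (?psi e'), fB (?psi e')} = ?phi ` e'"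
      proof
        assume "e' = e"
        then show ?thesis using g gA pq assms by auto
      next
        assume "e' \<in> S"
        then have "q \<notin> e'" "e' \<noteq> e" using assms by auto
        then show ?thesis using inv \<open>e' \<in> S\<close> unfolding inv_def by auto
      qed
    next
      fix t assume "t \<in> \<Union>(insert e S)"
      then show "(t \<in> TA \<longrightarrow> ?phi t \<in> A) \<and> (t \<in> TB \<longrightarrow> ?phi t \<in> B)"
        using inv qB gB assms vA pA unfolding inv_def by auto
    qed
    then show ?thesis by blast
  next
    assume pB: "p \<in> TB"
    have "p = w" "q = u" using pB uw assms disjT pq by (auto simp: doubleton_eq_iff)
    then have qA: "q \<in> TA" "q \<notin> TB" using uw disjT by auto
    have vB: "phi p \<in> B" using inv pB assms unfolding inv_def by blast
    have f1: "fB (psi e1) = phi p" using orient_B[OF inv sub e1(1) assms(4) e1(2) pB] .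
    have "psi e1 \<in> {g\<in>E'. col g = c e1 \<and> (fA g = phi p \<or> fB g = phi p)}"
      using inv e1 f1 unfolding inv_def by auto
    then have "dcol E' fA fB col (c e1) (phi p) > 0" unfolding dcol_def using finE'
      by (simp add: card_gt_0_iff) blast
    moreover have "dcol E' fA fB col (c e) (phi p) = dcol E' fA fB col (c e1) (phi p)"
      using eq vB pB nonleaf ce unfolding eqt_def by blast
    ultimately have "dcol E' fA fB col (c e) (phi p) > 0" by simp
    then have "{g\<in>E'. col g = c e \<and> (fA g = phi p \<or> fB g = phi p)} \<noteq> {}"
      unfolding dcol_def by (metis card.empty less_irrefl)
    then obtain g where g: "g \<in> E'" "col g = c e" "fA g = phi p \<or> fB g = phi p" by blast
    have gB: "fB g \<in> B" "fA g \<in> A" using g sub ends by auto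
    then have gA: "fB g = phi p" using g(3) vB disjAB by (metis IntI empty_iff)
    let ?phi = "phi(q := fA g)" and ?psi = "psi(e := g)"
    have "inv E' (insert e S) ?phi ?psi"
      unfolding inv_def
    proof (rule conjI; intro ballI)
      fix e' assume "e' \<in> insert e S"
      then show "?psi e' \<in> E' \<and> col (?psi e') = c e' \<and> {fA (?psi e'), fB (?psi e')} = ?phi ` e'"
      proof
        assume "e' = e"
        then show ?thesis using g gA pq assms by (auto simp: insert_commute)
      next
        assume "e' \<in> S"
        then have "q \<notin> e'" "e' \<noteq> e" using assms by auto
        then show ?thesis using inv \<open>e' \<in> S\<close> unfolding inv_def by auto
      qed
    next
      fix t assume "t \<in> \<Union>(insert e S)"
      then show "(t \<in> TA \<longrightarrow> ?phi t \<in> A) \<and> (t \<in> TB \<longrightarrow> ?phi t \<in> B)"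
        using inv qA gB assms vB pB unfolding inv_def by auto
    qed
    then show ?thesis by blast
  qed
qed

lemma grow:
  assumes "inv E' S phi psi" "conS S" "S \<subseteq> ET" "S \<noteq> {}" "E' \<subseteq> EG" "eqt E'"
  shows "\<exists>phi psi. inv E' ET phi psi"
  using assms
proof (induction "card (ET - S)" arbitrary: S phi psi rule: less_induct)
  case less
  show ?case
  proof (cases "S = ET")
    case True
    then show ?thesis using less by blast
  next
    case False
    obtain e p q where e: "e \<in> ET - S" "e = {p,q}" "p \<in> \<Union>S" "q \<notin> \<Union>S"
      using ext_exists[OF less(4) False less(5) less(3)] by blast
    obtain phi' psi' where i: "inv E' (insert e S) phi' psi'"
      using step[OF less(2) less(6) less(7) less(4)] e by blast
    have c: "conS (insert e S)" using conS_ins[OF less(3) e(3)] e(2) by simp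
    have "card (ET - insert e S) < card (ET - S)"
      using e(1) finET by (intro psubset_card_mono) auto
    then show ?thesis using less(1)[OF _ i c] less e by blast
  qed
qed

lemma init:
  assumes "E' \<subseteq> EG" "E' \<noteq> {}"
  shows "\<exists>S phi psi. inv E' S phi psi \<and> conS S \<and> S \<subseteq> ET \<and> S \<noteq> {}"
proof -
  obtain g0 where g0: "g0 \<in> E'" using assms by blast
  then have "col g0 \<in> c ` ET" using colr cim assms by blast
  then obtain e0 where e0: "e0 \<in> ET" "c e0 = col g0" by auto
  obtain u w where uw: "e0 = {u,w}" "u \<in> TA" "w \<in> TB" "u \<noteq> w" using edge_ends e0 by blast
  define phi where "phi = (\<lambda>x. if x = u then fA g0 else fB g0)"
  have gAB: "fA g0 \<in> A" "fB g0 \<in> B" using g0 assms ends by auto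
  have "inv E' {e0} phi (\<lambda>_. g0)"
    unfolding inv_def phi_def using g0 e0 uw gAB disjT by auto
  moreover have "conS {e0}"
    unfolding conS_def
  proof (intro ballI)
    fix x y assume "x \<in> \<Union>{e0}" "y \<in> \<Union>{e0}"
    moreover have "adj {e0} u w" "adj {e0} w u" using uw by (auto simp: adj_def insert_commute)
    ultimately show "(adj {e0})\<^sup>*\<^sup>* x y" using uw by auto
  qed
  ultimately show ?thesis using e0 by blast
qed

lemma copy:
  assumes "E' \<subseteq> EG" "E' \<noteq> {}" "eqt E'"
  shows "\<exists>phi psi. inv E' ET phi psi"
  using init[OF assms(1,2)] grow assms by blast

lemma cntA:
  assumes inv: "inv E' ET phi psi" and sub: "E' \<subseteq> EG" and "t \<in> TA" "j \<in> tcols ET c t" "v \<in> A"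
  shows "card {g\<in>psi ` ET. col g = j \<and> (fA g = v \<or> fB g = v)} = (if phi t = v then 1 else 0)"
proof -
  obtain ej where ej: "ej \<in> ET" "t \<in> ej" "j = c ej" using assms unfolding tcols_def by auto
  have fa: "fA (psi ej) = phi t" using orient_A[OF inv sub ej(1) _ ej(2) assms(3)] by simp
  have pe: "psi ej \<in> EG" using inv sub ej unfolding inv_def by blast
  then have "fB (psi ej) \<in> B" using ends by simp
  then have fb: "fB (psi ej) \<noteq> v" using assms(5) disjAB by (metis IntI empty_iff)
  have "{g\<in>psi ` ET. col g = j \<and> (fA g = v \<or> fB g = v)} = (if phi t = v then {psi ej} else {})"
  proof (cases "phi t = v")
    case True
    have "{g\<in>psi ` ET. col g = j \<and> (fA g = v \<or> fB g = v)} \<subseteq> {psi ej}"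
      using inv ej cinj unfolding inv_def inj_on_def by auto
    moreover have "psi ej \<in> {g\<in>psi ` ET. col g = j \<and> (fA g = v \<or> fB g = v)}"
      using inv ej fa True unfolding inv_def by auto
    ultimately show ?thesis using True by auto
  next
    case False
    have "{g\<in>psi ` ET. col g = j \<and> (fA g = v \<or> fB g = v)} \<subseteq> {psi ej}"
      using inv ej cinj unfolding inv_def inj_on_def by auto
    then show ?thesis using False fa fb by auto
  qed
  then show ?thesis by simp
qed

lemma cntB:
  assumes inv: "inv E' ET phi psi" and sub: "E' \<subseteq> EG" and "t \<in> TB" "j \<in> tcols ET c t" "v \<in> B"
  shows "card {g\<in>psi ` ET. col g = j \<and> (fA g = v \<or> fB g = v)} = (if phi t = v then 1 else 0)"
proof -
  obtain ej where ej: "ej \<in> ET" "t \<in> ej" "j = c ej" using assms unfolding tcols_def by auto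
  have fa: "fB (psi ej) = phi t" using orient_B[OF inv sub ej(1) _ ej(2) assms(3)] by simp
  have pe: "psi ej \<in> EG" using inv sub ej unfolding inv_def by blast
  then have "fA (psi ej) \<in> A" using ends by simp
  then have fb: "fA (psi ej) \<noteq> v" using assms(5) disjAB by (metis IntI empty_iff)
  have "{g\<in>psi ` ET. col g = j \<and> (fA g = v \<or> fB g = v)} = (if phi t = v then {psi ej} else {})"
  proof (cases "phi t = v")
    case True
    have "{g\<in>psi ` ET. col g = j \<and> (fA g = v \<or> fB g = v)} \<subseteq> {psi ej}"
      using inv ej cinj unfolding inv_def inj_on_def by auto
    moreover have "psi ej \<in> {g\<in>psi ` ET. col g = j \<and> (fA g = v \<or> fB g = v)}"
      using inv ej fa True unfolding inv_def by auto
    ultimately show ?thesis using True by auto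
  next
    case False
    have "{g\<in>psi ` ET. col g = j \<and> (fA g = v \<or> fB g = v)} \<subseteq> {psi ej}"
      using inv ej cinj unfolding inv_def inj_on_def by auto
    then show ?thesis using False fa fb by auto
  qed
  then show ?thesis by simp
qed

lemma remove:
  assumes inv: "inv E' ET phi psi" and sub: "E' \<subseteq> EG" and eq: "eqt E'"
  shows "eqt (E' - psi ` ET)" "psi ` ET \<subseteq> E'" "psi ` ET \<noteq> {}"
    "hom_copy VT ET A B fA fB (psi ` ET)"
proof -
  show F: "psi ` ET \<subseteq> E'" using inv unfolding inv_def by blast
  show "psi ` ET \<noteq> {}" using neET by simp
  have finE': "finite E'" using sub finEG finite_subset by blast
  note dd = dcol_diff[OF finE' F]
  show "eqt (E' - psi ` ET)"
    unfolding eqt_def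
  proof (intro conjI ballI impI)
    fix v t j k assume h: "v \<in> A" "t \<in> TA" "\<not> is_leaf ET t" "j \<in> tcols ET c t" "k \<in> tcols ET c t"
    have "dcol E' fA fB col j v = dcol E' fA fB col k v" using eq h unfolding eqt_def by blast
    then show "dcol (E' - psi ` ET) fA fB col j v = dcol (E' - psi ` ET) fA fB col k v"
      by (simp add: dd cntA[OF inv sub h(2) h(4) h(1)] cntA[OF inv sub h(2) h(5) h(1)])
  next
    fix v t j k assume h: "v \<in> B" "t \<in> TB" "\<not> is_leaf ET t" "j \<in> tcols ET c t" "k \<in> tcols ET c t"
    have "dcol E' fA fB col j v = dcol E' fA fB col k v" using eq h unfolding eqt_def by blast
    then show "dcol (E' - psi ` ET) fA fB col j v = dcol (E' - psi ` ET) fA fB col k v"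
      by (simp add: dd cntB[OF inv sub h(2) h(4) h(1)] cntB[OF inv sub h(2) h(5) h(1)])
  qed
  obtain e0 where e0: "e0 \<in> ET" using neET by blast
  define a0 where "a0 = fA (psi e0)"
  have a0: "a0 \<in> A" using inv sub e0 ends unfolding inv_def a0_def by blast
  define phi' where "phi' = (\<lambda>x. if x \<in> \<Union>ET then phi x else a0)"
  have "\<forall>v\<in>VT. phi' v \<in> A \<union> B"
  proof
    fix v assume "v \<in> VT"
    show "phi' v \<in> A \<union> B"
    proof (cases "v \<in> \<Union>ET")
      case True
      then have "v \<in> TA \<or> v \<in> TB" using UET by blast
      then show ?thesis using inv True unfolding inv_def phi'_def by auto
    next
      case False
      then show ?thesis using a0 unfolding phi'_def by auto
    qed
  qed
  moreover have "bij_betw psi ET (psi ` ET)"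
  proof -
    have "inj_on psi ET"
      using inv cinj unfolding inv_def inj_on_def by metis
    then show ?thesis by (simp add: bij_betw_def)
  qed
  moreover have "\<forall>e\<in>ET. {fA (psi e), fB (psi e)} = phi' ` e"
  proof
    fix e assume "e \<in> ET"
    then have "phi' ` e = phi ` e" unfolding phi'_def by auto
    then show "{fA (psi e), fB (psi e)} = phi' ` e" using inv \<open>e \<in> ET\<close> unfolding inv_def by auto
  qed
  ultimately show "hom_copy VT ET A B fA fB (psi ` ET)" unfolding hom_copy_def by blast
qed

lemma decomp:
  assumes "E' \<subseteq> EG" "eqt E'"
  shows "\<exists>P. \<Union>P = E' \<and> (\<forall>F1\<in>P. \<forall>F2\<in>P. F1 \<noteq> F2 \<longrightarrow> F1 \<inter> F2 = {}) \<and>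
     (\<forall>F\<in>P. F \<subseteq> E' \<and> hom_copy VT ET A B fA fB F)"
  using assms
proof (induction "card E'" arbitrary: E' rule: less_induct)
  case less
  show ?case
  proof (cases "E' = {}")
    case True
    then show ?thesis by (intro exI[of _ "{}"]) auto
  next
    case False
    obtain phi psi where i: "inv E' ET phi psi" using copy[OF less(2) False less(3)] by blast
    let ?F = "psi ` ET"
    note r = remove[OF i less(2) less(3)]
    have finE': "finite E'" using less(2) finEG finite_subset by blast
    have lt: "card (E' - ?F) < card E'"
      using r(2,3) finE' by (intro psubset_card_mono) auto
    have sub2: "E' - ?F \<subseteq> EG" using less(2) by auto
    from less(1)[OF lt sub2 r(1)]
    obtain P where P: "\<Union>P = E' - ?F" "\<forall>F1\<in>P. \<forall>F2\<in>P. F1 \<noteq> F2 \<longrightarrow> F1 \<inter> F2 = {}"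
      "\<forall>F\<in>P. F \<subseteq> E' - ?F \<and> hom_copy VT ET A B fA fB F"
      by (elim exE conjE) (rule that)
    have "\<Union>(insert ?F P) = E'" using P(1) r(2) by auto
    moreover have "\<forall>F1\<in>insert ?F P. \<forall>F2\<in>insert ?F P. F1 \<noteq> F2 \<longrightarrow> F1 \<inter> F2 = {}"
      using P(2,3) by auto
    moreover have "\<forall>F\<in>insert ?F P. F \<subseteq> E' \<and> hom_copy VT ET A B fA fB F"
      using P(3) r(2) r(4)[of VT] by auto
    ultimately show ?thesis by (intro exI[of _ "insert ?F P"]) simp
  qed
qed

end

theorem lemma12:
  fixes VT :: "'v set" and ET :: "'v set set" and TA TB :: "'v set"
    and c :: "'v set \<Rightarrow> nat" and m :: nat
    and A B :: "'a set" and EG :: "'e set" and fA fB :: "'e \<Rightarrow> 'a"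
  assumes "is_tree VT ET"
    and "m = card ET"
    and "proper_2col VT ET TA TB"
    and "\<exists>l\<in>TB. is_leaf ET l"
    and "bij_betw c ET {1..m}"
    and "bip_multigraph A B EG fA fB"
    and "\<exists>col. T_equitable ET TA TB c m A B EG fA fB col"
  shows "\<exists>P. T_star_decomposition VT ET A B EG fA fB P"
proof -
  obtain col where col: "T_equitable ET TA TB c m A B EG fA fB col" using assms(7) by blast
  have finET: "finite ET" using assms(5) bij_betw_finite by blast
  have neET: "ET \<noteq> {}"
  proof
    assume "ET = {}"
    then show False using assms(4) unfolding is_leaf_def tdeg_def by simp
  qed
  have sg: "simple_graph VT ET" using assms(1) unfolding is_tree_def by blast
  have UV: "\<Union>ET \<subseteq> VT"
  proof
    fix x assume "x \<in> \<Union>ET"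
    then obtain e where e: "e \<in> ET" "x \<in> e" by auto
    obtain u w where "e = {u, w}" "u \<in> VT" "w \<in> VT" using sg e(1) unfolding simple_graph_def by metis
    then show "x \<in> VT" using e(2) by auto
  qed
  have conn: "\<forall>x\<in>\<Union>ET. \<forall>y\<in>\<Union>ET. (adj ET)\<^sup>*\<^sup>* x y"
  proof (intro ballI)
    fix x y assume "x \<in> \<Union>ET" "y \<in> \<Union>ET"
    then have "x \<in> VT" "y \<in> VT" using UV by auto
    moreover have "graph_connected VT ET" using assms(1) unfolding is_tree_def by simp
    ultimately show "(adj ET)\<^sup>*\<^sup>* x y" unfolding graph_connected_def by simp
  qed
  have L: "L ET TA TB c m A B EG fA fB col"
    apply unfold_locales
    using finET neET assms(3,5,6,1) col conn
    unfolding proper_2col_def bij_betw_def bip_multigraph_def T_equitable_def is_tree_def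
    by auto
  have "L.eqt ET TA TB c A B fA fB col EG"
    using col L.eqt_def[OF L] unfolding T_equitable_def by blast
  then obtain P where P: "\<Union>P = EG" "\<forall>F1\<in>P. \<forall>F2\<in>P. F1 \<noteq> F2 \<longrightarrow> F1 \<inter> F2 = {}"
    "\<forall>F\<in>P. F \<subseteq> EG \<and> hom_copy VT ET A B fA fB F"
    using L.decomp[OF L, of EG VT] by blast
  then show ?thesis unfolding T_star_decomposition_def by blast
qed

end
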